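(* Let $\lambda\geqslant\omega$ be a cardinal and $n$ a positive integer, and let $\mathscr{I}_\lambda^n$ carry any Hausdorff topology making it a topological semigroup. Then the Bohr compactification $B(\mathscr{I}_\lambda^n)$ of $\mathscr{I}_\lambda^n$ is a trivial (one-element) semigroup.
   Context: A topological semigroup is a Hausdorff space with a continuous associative multiplication. For a set $X$ of cardinality $\lambda$, $\mathscr{I}(X)$ is the semigroup of all partial one-to-one maps of $X$ (including the empty map) under composition; the rank of $\alpha$ is $|\operatorname{ran}\alpha|$, and $\mathscr{I}_\lambda^n=\{\alpha\in\mathscr{I}(X):\operatorname{rank}\alpha\leqslant n\}$. A Bohr compactification of a topological semigroup $S$ is a pair $(\beta,B(S))$ where $B(S)$ is a compact topological semigroup and $\beta\colon S\to B(S)$ is a continuous homomorphism such that for every continuous homomorphism $g\colon S\to T$ into a compact topological semigroup $T$ there is a unique continuous homomorphism $f\colon B(S)\to T$ with $g=\beta f$ (maps written on the right, so $(s)g=((s)\beta)f$). *)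

theory Defs
  imports "HOL-Analysis.Analysis"
begin

text \<open>Maps are written on the right, so the
  product alpha * beta (first alpha, then beta) is beta o_m alpha (map_comp).\<close>

definition partial_bijections :: "'a set \<Rightarrow> ('a \<rightharpoonup> 'a) set" where
  "partial_bijections X = {\<alpha>. dom \<alpha> \<subseteq> X \<and> ran \<alpha> \<subseteq> X \<and> inj_on \<alpha> (dom \<alpha>)}"

definition rank :: "('a \<rightharpoonup> 'a) \<Rightarrow> nat" where
  "rank \<alpha> = card (ran \<alpha>)"

text \<open>The semigroup I_lambda^n of partial bijections of X of rank at most n
  (finite rank is required explicitly since card of an infinite set is 0).\<close>
definition I_rank :: "'a set \<Rightarrow> nat \<Rightarrow> ('a \<rightharpoonup> 'a) set" where
  "I_rank X n = {\<alpha> \<in> partial_bijections X. finite (ran \<alpha>) \<and> rank \<alpha> \<le> n}"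

definition I_mult :: "('a \<rightharpoonup> 'a) \<Rightarrow> ('a \<rightharpoonup> 'a) \<Rightarrow> ('a \<rightharpoonup> 'a)" where
  "I_mult \<alpha> \<beta> = \<beta> \<circ>\<^sub>m \<alpha>"

definition topological_semigroup :: "'a topology \<Rightarrow> ('a \<Rightarrow> 'a \<Rightarrow> 'a) \<Rightarrow> bool" where
  "topological_semigroup \<tau> m \<longleftrightarrow>
     Hausdorff_space \<tau> \<and>
     (\<forall>x\<in>topspace \<tau>. \<forall>y\<in>topspace \<tau>. m x y \<in> topspace \<tau>) \<and>
     (\<forall>x\<in>topspace \<tau>. \<forall>y\<in>topspace \<tau>. \<forall>z\<in>topspace \<tau>. m (m x y) z = m x (m y z)) \<and>
     continuous_map (prod_topology \<tau> \<tau>) \<tau> (\<lambda>(x, y). m x y)"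

definition semigroup_hom :: "'a set \<Rightarrow> ('a \<Rightarrow> 'a \<Rightarrow> 'a) \<Rightarrow> ('b \<Rightarrow> 'b \<Rightarrow> 'b) \<Rightarrow> ('a \<Rightarrow> 'b) \<Rightarrow> bool" where
  "semigroup_hom S m m' f \<longleftrightarrow> (\<forall>x\<in>S. \<forall>y\<in>S. f (m x y) = m' (f x) (f y))"

text \<open>The universal property is required for all compact topological semigroups whose
  carrier lives in the same type as B; uniqueness of f is up to agreement on B.\<close>
definition bohr_compactification ::
  "'a topology \<Rightarrow> ('a \<Rightarrow> 'a \<Rightarrow> 'a) \<Rightarrow> ('a \<Rightarrow> 'b) \<Rightarrow> 'b topology \<Rightarrow> ('b \<Rightarrow> 'b \<Rightarrow> 'b) \<Rightarrow> bool" where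
  "bohr_compactification \<tau> m \<beta> \<sigma> mB \<longleftrightarrow>
     topological_semigroup \<sigma> mB \<and> compact_space \<sigma> \<and>
     continuous_map \<tau> \<sigma> \<beta> \<and> semigroup_hom (topspace \<tau>) m mB \<beta> \<and>
     (\<forall>(\<rho> :: 'b topology) mT g.
        topological_semigroup \<rho> mT \<and> compact_space \<rho> \<and>
        continuous_map \<tau> \<rho> g \<and> semigroup_hom (topspace \<tau>) m mT g \<longrightarrow>
        (\<exists>f. continuous_map \<sigma> \<rho> f \<and> semigroup_hom (topspace \<sigma>) mB mT f \<and>
             (\<forall>s\<in>topspace \<tau>. g s = f (\<beta> s)) \<and>
             (\<forall>f'. continuous_map \<sigma> \<rho> f' \<and> semigroup_hom (topspace \<sigma>) mB mT f' \<and>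
                   (\<forall>s\<in>topspace \<tau>. g s = f' (\<beta> s)) \<longrightarrow>
                   (\<forall>x\<in>topspace \<sigma>. f' x = f x))))"

end

theory Submission
  imports Defs
begin

lemma key_top:
  fixes a b :: "nat \<Rightarrow> 'b"
  assumes ts: "topological_semigroup \<sigma> mB" and cs: "compact_space \<sigma>"
    and ab: "\<And>m. a m \<in> topspace \<sigma> \<and> b m \<in> topspace \<sigma>"
    and d: "\<And>m. mB (a m) (b m) = e" and off: "\<And>m k. m \<noteq> k \<Longrightarrow> mB (a m) (b k) = z"
  shows "e = z"
proof (rule ccontr)
  assume ne: "e \<noteq> z"
  define p where "p = (\<lambda>m::nat. (a m, b m))"
  have injp: "inj p"
  proof (rule injI)
    fix m k assume "p m = p k"
    then have "a m = a k" "b m = b k" by (auto simp: p_def)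
    show "m = k"
    proof (rule ccontr)
      assume "m \<noteq> k"
      then have "mB (a m) (b k) = z" by (rule off)
      with d[of m] \<open>b m = b k\<close> ne show False by simp
    qed
  qed
  have Hs: "Hausdorff_space \<sigma>" and cl: "\<And>x y. x\<in>topspace \<sigma> \<Longrightarrow> y\<in>topspace \<sigma> \<Longrightarrow> mB x y \<in> topspace \<sigma>"
    and cont: "continuous_map (prod_topology \<sigma> \<sigma>) \<sigma> (\<lambda>(x, y). mB x y)"
    using ts by (auto simp: topological_semigroup_def)
  have t1: "t1_space \<sigma>" using Hs Hausdorff_imp_t1_space by blast
  have t1p: "t1_space (prod_topology \<sigma> \<sigma>)"
    using Hs Hausdorff_space_prod_topology Hausdorff_imp_t1_space by blast
  have cp: "compact_space (prod_topology \<sigma> \<sigma>)" using cs compact_space_prod_topology by blast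
  have inf: "infinite (range p)" using injp by (simp add: finite_image_iff)
  have sub: "range p \<subseteq> topspace (prod_topology \<sigma> \<sigma>)" using ab by (auto simp: p_def)
  obtain q where q: "q \<in> prod_topology \<sigma> \<sigma> derived_set_of (range p)"
    using compact_space_imp_Bolzano_Weierstrass[OF cp inf sub] by blast
  obtain qa qb where qq: "q = (qa, qb)" by (cases q)
  have qtop: "qa \<in> topspace \<sigma>" "qb \<in> topspace \<sigma>"
    using q qq by (auto simp: in_derived_set_of)
  define c where "c = mB qa qb"
  have ctop: "c \<in> topspace \<sigma>" using cl qtop c_def by blast
  have etop: "e \<in> topspace \<sigma>" using cl ab d by metis
  have ztop: "z \<in> topspace \<sigma>" using cl ab off[of 0 1] by (metis zero_neq_one)
  obtain W where W: "openin \<sigma> W" "c \<in> W" "e \<notin> W \<or> z \<notin> W"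
  proof (cases "c = e")
    case True
    then have "c \<noteq> z" using ne by simp
    then obtain W where "openin \<sigma> W" "c \<in> W" "z \<notin> W"
      using t1 ctop ztop unfolding t1_space_def by blast
    then show ?thesis using that by blast
  next
    case False
    then obtain W where "openin \<sigma> W" "c \<in> W" "e \<notin> W"
      using t1 ctop etop unfolding t1_space_def by blast
    then show ?thesis using that by blast
  qed
  define Ob where "Ob = {x \<in> topspace (prod_topology \<sigma> \<sigma>). (\<lambda>(x, y). mB x y) x \<in> W}"
  have oOb: "openin (prod_topology \<sigma> \<sigma>) Ob"
    unfolding Ob_def using openin_continuous_map_preimage[OF cont W(1)] .
  have qOb: "(qa, qb) \<in> Ob" using qtop W(2) c_def by (auto simp: Ob_def)
  obtain G H where GH: "openin \<sigma> G" "openin \<sigma> H" "qa \<in> G" "qb \<in> H" "G \<times> H \<subseteq> Ob"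
    using oOb[unfolded openin_prod_topology_alt, rule_format, OF qOb] by blast
  have oGH: "openin (prod_topology \<sigma> \<sigma>) (G \<times> H)"
    using GH by (simp add: openin_prod_Times_iff)
  have qd: "\<And>T. q \<in> T \<Longrightarrow> openin (prod_topology \<sigma> \<sigma>) T \<Longrightarrow> \<exists>y. y \<noteq> q \<and> y \<in> range p \<and> y \<in> T"
    using q unfolding in_derived_set_of by blast
  have qGH: "q \<in> G \<times> H" using GH qq by simp
  obtain y1 where y1c: "y1 \<noteq> q \<and> y1 \<in> range p \<and> y1 \<in> G \<times> H"
    using qd[OF qGH oGH] by (elim exE)
  note y1 = y1c[THEN conjunct1] y1c[THEN conjunct2, THEN conjunct1] y1c[THEN conjunct2, THEN conjunct2]
  have oD: "openin (prod_topology \<sigma> \<sigma>) (G \<times> H - {y1})"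
    using t1_space_openin_delete[THEN iffD1, OF t1p, rule_format, OF conjI, OF oGH y1(3)] .
  have qD: "q \<in> G \<times> H - {y1}" using qGH y1 by simp
  obtain y2 where y2c: "y2 \<noteq> q \<and> y2 \<in> range p \<and> y2 \<in> G \<times> H - {y1}"
    using qd[OF qD oD] by (elim exE)
  note y2 = y2c[THEN conjunct1] y2c[THEN conjunct2, THEN conjunct1] y2c[THEN conjunct2, THEN conjunct2]
  obtain m where m: "y1 = p m" using y1(2) by blast
  obtain k where k: "y2 = p k" using y2(2) by blast
  note mk = m k
  have "m \<noteq> k" using mk y2 by auto
  have "(a m, b m) \<in> Ob" "(a m, b k) \<in> Ob"
    using GH(5) y1 y2 mk by (auto simp: p_def)
  then have "e \<in> W" "z \<in> W" using d off[OF \<open>m \<noteq> k\<close>] by (auto simp: Ob_def)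
  then show False using W(3) by blast
qed

lemma dom_finite_card:
  assumes "inj_on \<alpha> (dom \<alpha>)" "finite (ran \<alpha>)"
  shows "finite (dom \<alpha>) \<and> card (dom \<alpha>) = card (ran \<alpha>)"
proof -
  have r: "ran \<alpha> = (the \<circ> \<alpha>) ` dom \<alpha>" by (force simp: ran_def dom_def)
  have i: "inj_on (the \<circ> \<alpha>) (dom \<alpha>)"
    using assms(1) unfolding inj_on_def by (auto simp: dom_def)
  show ?thesis using r i assms(2) by (metis card_image finite_image_iff)
qed

lemma decomp:
  fixes \<alpha> :: "'a \<rightharpoonup> 'a"
  assumes X: "infinite X" and A: "\<alpha> \<in> I_rank X n"
  shows "\<exists>a b :: nat \<Rightarrow> ('a \<rightharpoonup> 'a). (\<forall>m. a m \<in> I_rank X n \<and> b m \<in> I_rank X n) \<and>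
     (\<forall>m. I_mult (a m) (b m) = \<alpha>) \<and> (\<forall>m k. m \<noteq> k \<longrightarrow> I_mult (a m) (b k) = Map.empty)"
proof -
  define D where "D = dom \<alpha>"
  have Ad: "dom \<alpha> \<subseteq> X" "ran \<alpha> \<subseteq> X" "inj_on \<alpha> D" "finite (ran \<alpha>)" "card (ran \<alpha>) \<le> n"
    using A by (auto simp: I_rank_def partial_bijections_def rank_def D_def)
  have fD: "finite D" and cD: "card D = card (ran \<alpha>)"
    using dom_finite_card[of \<alpha>] Ad by (auto simp: D_def)
  obtain e :: "nat \<Rightarrow> 'a" where e: "inj e" "range e \<subseteq> X"
    using infinite_countable_subset[OF X] by blast
  define d where "d = to_nat_on D"
  have id: "inj_on d D" unfolding d_def using fD by (simp add: countable_finite inj_on_to_nat_on)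
  define c where "c = (\<lambda>m x. e (prod_encode (m, d x)))"
  have cX: "\<And>m x. c m x \<in> X" using e by (auto simp: c_def)
  have cinj: "\<And>m. inj_on (c m) D"
  proof (rule inj_onI)
    fix m x y assume xy: "x \<in> D" "y \<in> D" "c m x = c m y"
    then have "prod_encode (m, d x) = prod_encode (m, d y)"
      using e(1) unfolding c_def by (meson injD)
    then have "d x = d y" by simp
    then show "x = y" using id xy by (meson inj_onD)
  qed
  have cdis: "\<And>m k x y. c m x = c k y \<Longrightarrow> m = k"
  proof -
    fix m k x y assume "c m x = c k y"
    then have "prod_encode (m, d x) = prod_encode (k, d y)"
      using e(1) unfolding c_def by (meson injD)
    then show "m = k" by simp
  qed
  define a where "a = (\<lambda>m x. if x \<in> D then Some (c m x) else None)"
  define b where "b = (\<lambda>m y. if y \<in> c m ` D then \<alpha> (inv_into D (c m) y) else None)"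
  have inv: "\<And>m x. x \<in> D \<Longrightarrow> inv_into D (c m) (c m x) = x"
    using cinj by (simp add: inv_into_f_f)
  have domA: "\<And>m. dom (a m) = D" by (auto simp: a_def dom_def)
  have ranA: "\<And>m. ran (a m) = c m ` D" by (auto simp: a_def ran_def)
  have domB: "\<And>m. dom (b m) = c m ` D"
  proof
    fix m show "dom (b m) \<subseteq> c m ` D" by (auto simp: b_def dom_def split: if_splits)
  next
    fix m show "c m ` D \<subseteq> dom (b m)"
    proof
      fix y assume "y \<in> c m ` D"
      then obtain x where x: "x \<in> D" "y = c m x" by blast
      then have "b m y = \<alpha> x" using inv by (auto simp: b_def)
      then show "y \<in> dom (b m)" using x(1) by (auto simp: D_def)
    qed
  qed
  have ranB: "\<And>m. ran (b m) = ran \<alpha>"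
  proof -
    fix m
    show "ran (b m) = ran \<alpha>"
    proof
      show "ran (b m) \<subseteq> ran \<alpha>" by (auto simp: b_def ran_def split: if_splits)
    next
      show "ran \<alpha> \<subseteq> ran (b m)"
      proof
        fix v assume "v \<in> ran \<alpha>"
        then obtain x where x: "\<alpha> x = Some v" by (auto simp: ran_def)
        then have "x \<in> D" by (auto simp: D_def)
        then have "b m (c m x) = Some v" using x inv by (auto simp: b_def)
        then show "v \<in> ran (b m)" by (auto simp: ran_def)
      qed
    qed
  qed
  have injA: "\<And>m. inj_on (a m) (dom (a m))"
    using cinj unfolding domA inj_on_def by (auto simp: a_def)
  have injB: "\<And>m. inj_on (b m) (dom (b m))"
  proof -
    fix m
    show "inj_on (b m) (dom (b m))"
    proof (rule inj_onI)
      fix y1 y2 assume y: "y1 \<in> dom (b m)" "y2 \<in> dom (b m)" "b m y1 = b m y2"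
      then obtain x1 x2 where x: "x1 \<in> D" "x2 \<in> D" "y1 = c m x1" "y2 = c m x2"
        using domB by blast
      then have "\<alpha> x1 = \<alpha> x2" using y(3) inv by (auto simp: b_def)
      then have "x1 = x2" using Ad(3) x(1,2) by (auto simp: inj_on_def D_def)
      then show "y1 = y2" using x by simp
    qed
  qed
  have memA: "\<And>m. a m \<in> I_rank X n"
    unfolding I_rank_def partial_bijections_def rank_def
    using domA ranA injA cX fD Ad cD cinj by (auto simp: D_def card_image)
  have memB: "\<And>m. b m \<in> I_rank X n"
    unfolding I_rank_def partial_bijections_def rank_def
    using domB ranB injB cX Ad by auto
  have diag: "\<And>m. I_mult (a m) (b m) = \<alpha>"
  proof
    fix m x
    show "I_mult (a m) (b m) x = \<alpha> x"
    proof (cases "x \<in> D")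
      case True then show ?thesis by (simp add: I_mult_def map_comp_def a_def b_def inv)
    next
      case False then show ?thesis by (auto simp: I_mult_def map_comp_def a_def D_def dom_def)
    qed
  qed
  have offd: "\<And>m k. m \<noteq> k \<Longrightarrow> I_mult (a m) (b k) = Map.empty"
  proof -
    fix m k :: nat assume mk: "m \<noteq> k"
    show "I_mult (a m) (b k) = Map.empty"
    proof
      fix x
      have "c m x \<notin> c k ` D" using cdis mk by blast
      then show "I_mult (a m) (b k) x = None"
        by (simp add: I_mult_def map_comp_def a_def b_def)
    qed
  qed
  show ?thesis
    by (rule exI[of _ a], rule exI[of _ b]) (simp add: memA memB diag offd)
qed

theorem theorem10:
  fixes X :: "'a set" and n :: nat
    and \<tau> :: "('a \<rightharpoonup> 'a) topology"
    and \<beta> :: "('a \<rightharpoonup> 'a) \<Rightarrow> 'b" and \<sigma> :: "'b topology" and mB :: "'b \<Rightarrow> 'b \<Rightarrow> 'b"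
  assumes "infinite X" and "n \<ge> 1"
    and "topspace \<tau> = I_rank X n"
    and "topological_semigroup \<tau> I_mult"
    and "bohr_compactification \<tau> I_mult \<beta> \<sigma> mB"
  shows "\<exists>b. topspace \<sigma> = {b}"
proof -
  note B = assms(5)[unfolded bohr_compactification_def]
  have ts: "topological_semigroup \<sigma> mB" using B by (rule conjunct1)
  have cs: "compact_space \<sigma>" using B[THEN conjunct2] by (rule conjunct1)
  have cb: "continuous_map \<tau> \<sigma> \<beta>" using B[THEN conjunct2, THEN conjunct2] by (rule conjunct1)
  have hb: "semigroup_hom (topspace \<tau>) I_mult mB \<beta>"
    using B[THEN conjunct2, THEN conjunct2, THEN conjunct2] by (rule conjunct1)
  note univ = B[THEN conjunct2, THEN conjunct2, THEN conjunct2, THEN conjunct2]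
  have hom: "\<And>x y. x \<in> topspace \<tau> \<Longrightarrow> y \<in> topspace \<tau> \<Longrightarrow> \<beta> (I_mult x y) = mB (\<beta> x) (\<beta> y)"
    using hb unfolding semigroup_hom_def by blast
  have btop: "\<And>s. s \<in> topspace \<tau> \<Longrightarrow> \<beta> s \<in> topspace \<sigma>"
    using cb continuous_map_image_subset_topspace by blast
  have z0: "Map.empty \<in> topspace \<tau>"
    using assms(3) by (simp add: I_rank_def partial_bijections_def rank_def)
  define e where "e = \<beta> Map.empty"
  have etop: "e \<in> topspace \<sigma>" using btop z0 e_def by blast
  have emp: "I_mult Map.empty Map.empty = (Map.empty :: 'a \<rightharpoonup> 'a)"
    by (simp add: I_mult_def map_comp_def)
  have idem: "mB e e = e" using hom[OF z0 z0] emp e_def by simp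
  have const: "\<And>s. s \<in> topspace \<tau> \<Longrightarrow> \<beta> s = e"
  proof -
    fix s assume s: "s \<in> topspace \<tau>"
    then obtain a b :: "nat \<Rightarrow> ('a \<rightharpoonup> 'a)" where
      ab: "\<forall>m. a m \<in> I_rank X n \<and> b m \<in> I_rank X n"
      and d: "\<forall>m. I_mult (a m) (b m) = s"
      and off: "\<forall>m k. m \<noteq> k \<longrightarrow> I_mult (a m) (b k) = Map.empty"
      using decomp[OF assms(1), of s n] assms(3) by blast
    show "\<beta> s = e"
    proof (rule key_top[OF ts cs, of "\<lambda>m. \<beta> (a m)" "\<lambda>m. \<beta> (b m)"])
      show "\<And>m. \<beta> (a m) \<in> topspace \<sigma> \<and> \<beta> (b m) \<in> topspace \<sigma>"
        using ab btop assms(3) by auto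
      show "mB (\<beta> (a m)) (\<beta> (b m)) = \<beta> s" for m
      proof -
        have am: "a m \<in> topspace \<tau>" "b m \<in> topspace \<tau>" using ab assms(3) by auto
        have "\<beta> (I_mult (a m) (b m)) = mB (\<beta> (a m)) (\<beta> (b m))" by (rule hom[OF am])
        then show ?thesis using d by simp
      qed
      show "mB (\<beta> (a m)) (\<beta> (b k)) = e" if mk: "m \<noteq> k" for m k
      proof -
        have am: "a m \<in> topspace \<tau>" "b k \<in> topspace \<tau>" using ab assms(3) by auto
        have "\<beta> (I_mult (a m) (b k)) = mB (\<beta> (a m)) (\<beta> (b k))" by (rule hom[OF am])
        then show ?thesis using off mk e_def by simp
      qed
    qed
  qed
  have "\<exists>f. continuous_map \<sigma> \<sigma> f \<and> semigroup_hom (topspace \<sigma>) mB mB f \<and>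
             (\<forall>s\<in>topspace \<tau>. \<beta> s = f (\<beta> s)) \<and>
             (\<forall>f'. continuous_map \<sigma> \<sigma> f' \<and> semigroup_hom (topspace \<sigma>) mB mB f' \<and>
                   (\<forall>s\<in>topspace \<tau>. \<beta> s = f' (\<beta> s)) \<longrightarrow>
                   (\<forall>x\<in>topspace \<sigma>. f' x = f x))"
    using univ[rule_format, of \<sigma> mB \<beta>] ts cs cb hb by simp
  then obtain f where
    uniq: "\<forall>f'. continuous_map \<sigma> \<sigma> f' \<and> semigroup_hom (topspace \<sigma>) mB mB f' \<and>
                   (\<forall>s\<in>topspace \<tau>. \<beta> s = f' (\<beta> s)) \<longrightarrow>
                   (\<forall>x\<in>topspace \<sigma>. f' x = f x)"
    by blast
  have c1: "continuous_map \<sigma> \<sigma> id" by (rule continuous_map_id)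
  have h1: "semigroup_hom (topspace \<sigma>) mB mB id" by (simp add: semigroup_hom_def)
  have g1: "\<forall>s\<in>topspace \<tau>. \<beta> s = id (\<beta> s)" by simp
  have "\<forall>x\<in>topspace \<sigma>. id x = f x"
    using uniq c1 h1 g1 by blast
  moreover
  have c2: "continuous_map \<sigma> \<sigma> (\<lambda>_. e)" using etop by (simp add: continuous_map_const)
  have h2: "semigroup_hom (topspace \<sigma>) mB mB (\<lambda>_. e)" using idem by (simp add: semigroup_hom_def)
  have g2: "\<forall>s\<in>topspace \<tau>. \<beta> s = (\<lambda>_. e) (\<beta> s)" using const by simp
  have "\<forall>x\<in>topspace \<sigma>. (\<lambda>_. e) x = f x"
    using uniq c2 h2 g2 by blast
  ultimately have "\<forall>x\<in>topspace \<sigma>. x = e" by simp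
  then have "topspace \<sigma> = {e}" using etop by blast
  then show ?thesis by blast
qed

end
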